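(* Let $q$ be a prime power, $4\le n\le q$, $\alpha_1,\dots,\alpha_n\in\mathbb{F}_q$ distinct, $u_1,\dots,u_n\in\mathbb{F}_q^*$, and $H\in\mathbb{F}_q^{3\times n}$ with $H_{ab}=u_b\alpha_b^{a-1}$ (so $\ker H$ is a length-$n$ Reed–Solomon-type code of distance $4$). Then the number of $e\in\mathbb{F}_q^n$ with $|e|=2$ for which there exists $e'\in\mathbb{F}_q^n$, $e'\ne e$, $|e'|\le 2$, $He'=He$, is at most $$\frac{(n-2)(n-3)}{2(q-1)}\cdot(q-1)^2\binom{n}{2}.$$ That is, the fraction of weight-2 errors that are not the unique minimum-weight error with their syndrome is at most $\frac{(n-2)(n-3)}{2(q-1)}$.
   Context: $|e|$ denotes the Hamming weight (number of nonzero coordinates) of $e\in\mathbb{F}_q^n$. *)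

theory Defs
  imports Complex_Main "HOL-Library.Cardinality"
begin

text \<open>Vectors in F_q^n are represented as functions nat => 'a vanishing outside {0..<n};
  coordinate b (0-based) corresponds to coordinate b+1 of the paper.\<close>

definition vecs :: "nat \<Rightarrow> (nat \<Rightarrow> 'a::zero) set" where
  "vecs n = {e. \<forall>i\<ge>n. e i = 0}"

definition hweight :: "nat \<Rightarrow> (nat \<Rightarrow> 'a::zero) \<Rightarrow> nat" where
  "hweight n e = card {i. i < n \<and> e i \<noteq> 0}"

text \<open>Row a (0-based, a < 3) of H e, where H_{ab} = u_b * alpha_b^a.\<close>
definition syndrome :: "nat \<Rightarrow> (nat \<Rightarrow> 'a::field) \<Rightarrow> (nat \<Rightarrow> 'a) \<Rightarrow> (nat \<Rightarrow> 'a) \<Rightarrow> nat \<Rightarrow> 'a" where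
  "syndrome n u \<alpha> e a = (\<Sum>b<n. u b * \<alpha> b ^ a * e b)"

end

theory Submission imports Defs begin

lemma three_zero:
  fixes \<alpha> u :: "nat \<Rightarrow> 'a::field"
  assumes "i \<noteq> j" "j \<noteq> k" "i \<noteq> k" "\<alpha> i \<noteq> \<alpha> j" "\<alpha> j \<noteq> \<alpha> k" "\<alpha> i \<noteq> \<alpha> k"
    and "\<forall>a<3. y i * \<alpha> i ^ a + y j * \<alpha> j ^ a + y k * \<alpha> k ^ a = 0"
  shows "y i = 0"
proof -
  have e0: "y i + y j + y k = 0" using assms(7)[rule_format, of 0] by simp
  have e1: "y i * \<alpha> i + y j * \<alpha> j + y k * \<alpha> k = 0" using assms(7)[rule_format, of 1] by simp
  have e2: "y i * \<alpha> i^2 + y j * \<alpha> j^2 + y k * \<alpha> k^2 = 0" using assms(7)[rule_format, of 2] by simp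
  have "y i * ((\<alpha> i - \<alpha> j) * (\<alpha> i - \<alpha> k)) =
     (y i * \<alpha> i^2 + y j * \<alpha> j^2 + y k * \<alpha> k^2) - (\<alpha> j + \<alpha> k) * (y i * \<alpha> i + y j * \<alpha> j + y k * \<alpha> k)
      + \<alpha> j * \<alpha> k * (y i + y j + y k)"
    by (simp add: algebra_simps power2_eq_square)
  also have "\<dots> = 0" using e0 e1 e2 by simp
  finally show ?thesis using assms(4,6) by simp
qed

lemma codeword_zero:
  fixes \<alpha> u c :: "nat \<Rightarrow> 'a::field"
  assumes "3 \<le> n" "inj_on \<alpha> {..<n}" "\<forall>b<n. u b \<noteq> 0"
    and "\<forall>a<3. syndrome n u \<alpha> c a = 0"
    and "card {i. i < n \<and> c i \<noteq> 0} \<le> 3"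
  shows "\<forall>i<n. c i = 0"
proof -
  define S where "S = {i. i < n \<and> c i \<noteq> 0}"
  have fS: "finite S" "S \<subseteq> {..<n}" unfolding S_def by auto
  have "3 - card S \<le> card ({..<n} - S)" using fS assms(1) by (simp add: card_Diff_subset)
  then obtain T' where T': "T' \<subseteq> {..<n} - S" "card T' = 3 - card S" "finite T'"
    by (meson obtain_subset_with_card_n)
  define T where "T = S \<union> T'"
  have "card T = 3" unfolding T_def using T' fS assms(5)[folded S_def]
    by (subst card_Un_disjoint) auto
  then obtain i j k where ijk: "T = {i,j,k}" "i \<noteq> j" "j \<noteq> k" "i \<noteq> k" by (auto simp: card_3_iff)
  have Tn: "T \<subseteq> {..<n}" using T' fS unfolding T_def by auto
  define y where "y b = u b * c b" for b
  have syn: "syndrome n u \<alpha> c a = (\<Sum>b\<in>T. u b * \<alpha> b ^ a * c b)" for a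
    unfolding syndrome_def
    by (rule sum.mono_neutral_right) (use Tn T' in \<open>auto simp: T_def S_def\<close>)
  have eqs: "\<forall>a<3. y i * \<alpha> i ^ a + y j * \<alpha> j ^ a + y k * \<alpha> k ^ a = 0"
  proof (intro allI impI)
    fix a :: nat assume "a < 3"
    have "syndrome n u \<alpha> c a = u i * \<alpha> i ^ a * c i + (u j * \<alpha> j ^ a * c j + u k * \<alpha> k ^ a * c k)"
      unfolding syn ijk(1) using ijk by simp
    also have "\<dots> = y i * \<alpha> i ^ a + y j * \<alpha> j ^ a + y k * \<alpha> k ^ a"
      unfolding y_def by (simp only: mult_ac add_ac)
    finally show "y i * \<alpha> i ^ a + y j * \<alpha> j ^ a + y k * \<alpha> k ^ a = 0"
      using assms(4) \<open>a < 3\<close> by simp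
  qed
  have inT: "i < n" "j < n" "k < n" using Tn ijk by auto
  have d: "\<alpha> i \<noteq> \<alpha> j" "\<alpha> j \<noteq> \<alpha> k" "\<alpha> i \<noteq> \<alpha> k"
    using assms(2) inT ijk by (auto dest: inj_onD)
  have "y i = 0" by (rule three_zero[OF ijk(2-4) d eqs])
  moreover have "y j = 0" by (rule three_zero[of j i k]) (use ijk d eqs in \<open>auto simp: add_ac\<close>)
  moreover have "y k = 0" by (rule three_zero[of k i j]) (use ijk d eqs in \<open>auto simp: add_ac\<close>)
  ultimately have "\<forall>b\<in>T. c b = 0" using ijk inT assms(3) by (auto simp: y_def)
  note Tz = this
  show ?thesis
  proof (intro allI impI)
    fix b assume "b < n"
    show "c b = 0"
    proof (cases "b \<in> T")
      case True then show ?thesis using Tz by blast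
    next
      case False then have "b \<notin> S" unfolding T_def by blast
      then show ?thesis using \<open>b < n\<close> unfolding S_def by blast
    qed
  qed
qed

lemma syn_diff:
  "syndrome n u \<alpha> (\<lambda>b. f b - g b) a = syndrome n u \<alpha> f a - syndrome n u \<alpha> g a"
  unfolding syndrome_def by (simp add: sum_subtractf algebra_simps)

lemma struct2:
  fixes \<alpha> u e e' :: "nat \<Rightarrow> 'a::field"
  assumes "3 \<le> n" "inj_on \<alpha> {..<n}" "\<forall>b<n. u b \<noteq> 0"
    and "e \<in> vecs n" "hweight n e = 2" "e' \<in> vecs n" "e' \<noteq> e" "hweight n e' \<le> 2"
    and "\<forall>a<3. syndrome n u \<alpha> e' a = syndrome n u \<alpha> e a"
  shows "{i. i < n \<and> e' i \<noteq> 0} \<inter> {i. i < n \<and> e i \<noteq> 0} = {}"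
    "card {i. i < n \<and> e' i \<noteq> 0} = 2"
proof -
  define c where "c b = e b - e' b" for b
  define A where "A = {i. i < n \<and> e i \<noteq> 0}"
  define B where "B = {i. i < n \<and> e' i \<noteq> 0}"
  have fin: "finite A" "finite B" unfolding A_def B_def by auto
  have cA: "card A = 2" "card B \<le> 2" using assms(5,8) unfolding A_def B_def hweight_def by auto
  have sc: "\<forall>a<3. syndrome n u \<alpha> c a = 0"
    unfolding c_def syn_diff using assms(9) by simp
  obtain b where "e b \<noteq> e' b" using assms(7) by (metis ext)
  moreover have "b < n"
  proof (rule ccontr)
    assume "\<not> b < n"
    then have "e b = 0" "e' b = 0" using assms(4,6) unfolding vecs_def by auto
    then show False using \<open>e b \<noteq> e' b\<close> by simp
  qed
  ultimately have "\<not> (\<forall>i<n. c i = 0)" unfolding c_def by auto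
  then have "\<not> card {i. i < n \<and> c i \<noteq> 0} \<le> 3"
    using codeword_zero[OF assms(1-3) sc] by blast
  moreover have "{i. i < n \<and> c i \<noteq> 0} \<subseteq> A \<union> B" unfolding A_def B_def c_def by auto
  then have "card {i. i < n \<and> c i \<noteq> 0} \<le> card (A \<union> B)" using fin by (intro card_mono) auto
  ultimately have "card (A \<union> B) \<ge> 4" by linarith
  moreover have "card (A \<union> B) + card (A \<inter> B) = card A + card B" using card_Un_Int[OF fin] by simp
  ultimately have "card (A \<inter> B) = 0" "card B = 2" using cA by auto
  then show "B \<inter> A = {}" "card B = 2" using fin by auto
qed

lemma two_choose2: "2 * (k choose 2) = k * (k - 1)"
proof -
  have "even (k * (k - 1))" by (cases k) auto
  then show ?thesis unfolding choose_two by simp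
qed

theorem mainTheorem9:
  fixes \<alpha> u :: "nat \<Rightarrow> 'a::{finite,field}" and n :: nat
  assumes "4 \<le> n" and "n \<le> CARD('a)"
    and "inj_on \<alpha> {..<n}"
    and "\<forall>b<n. u b \<noteq> 0"
  shows "real (card {e \<in> vecs n. hweight n e = 2 \<and>
            (\<exists>e'\<in>vecs n. e' \<noteq> e \<and> hweight n e' \<le> 2 \<and>
               (\<forall>a<3. syndrome n u \<alpha> e' a = syndrome n u \<alpha> e a))})
         \<le> (real (n - 2) * real (n - 3)) / (2 * (real CARD('a) - 1))
            * (real CARD('a) - 1)^2 * real (n choose 2)"
proof -
  have n3: "3 \<le> n" using assms(1) by simp
  define supp :: "(nat \<Rightarrow> 'a) \<Rightarrow> nat set" where "supp e = {i. i < n \<and> e i \<noteq> 0}" for e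
  define good where "good e e' \<longleftrightarrow> e' \<in> vecs n \<and> e' \<noteq> e \<and> hweight n e' \<le> 2 \<and>
               (\<forall>a<3. syndrome n u \<alpha> e' a = syndrome n u \<alpha> e a)" for e e' :: "nat \<Rightarrow> 'a"
  define B where "B = {e \<in> vecs n. hweight n e = 2 \<and>
            (\<exists>e'\<in>vecs n. e' \<noteq> e \<and> hweight n e' \<le> 2 \<and>
               (\<forall>a<3. syndrome n u \<alpha> e' a = syndrome n u \<alpha> e a))}"
  define W where "W e = (SOME e'. good e e')" for e
  define f where "f e = (supp e, supp (W e), e (Min (supp e)))" for e
  define PP where "PP = {P. P \<subseteq> {..<n} \<and> card P = 2}"
  define QQ where "QQ P = {Q. Q \<subseteq> {..<n} - P \<and> card Q = 2}" for P
  define T where "T = Sigma PP (\<lambda>P. QQ P \<times> (UNIV - {0::'a}))"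
  have Wg: "good e (W e)" if "e \<in> B" for e
  proof -
    have "\<exists>e'. good e e'" using that unfolding B_def good_def by blast
    then show ?thesis unfolding W_def by (rule someI_ex)
  qed
  have props: "supp (W e) \<inter> supp e = {}" "card (supp (W e)) = 2" "card (supp e) = 2"
    "e \<in> vecs n" "W e \<in> vecs n"
    "\<forall>a<3. syndrome n u \<alpha> (W e) a = syndrome n u \<alpha> e a"
    if "e \<in> B" for e
  proof -
    have g: "good e (W e)" using Wg that .
    have e: "e \<in> vecs n" "hweight n e = 2" using that unfolding B_def by auto
    show "supp (W e) \<inter> supp e = {}" "card (supp (W e)) = 2"
      using struct2[OF n3 assms(3,4) e, of "W e"] g unfolding good_def supp_def by auto
    show "card (supp e) = 2" using e(2) unfolding hweight_def supp_def .
    show "e \<in> vecs n" "W e \<in> vecs n" "\<forall>a<3. syndrome n u \<alpha> (W e) a = syndrome n u \<alpha> e a"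
      using e g unfolding good_def by auto
  qed
  have suppn: "supp e \<subseteq> {..<n}" for e unfolding supp_def by auto
  have finsupp: "finite (supp e)" for e using suppn by (metis finite_lessThan finite_subset)
  have finPP: "finite PP" unfolding PP_def by (rule finite_subset[of _ "Pow {..<n}"]) auto
  have finQQ: "finite (QQ P)" for P unfolding QQ_def by (rule finite_subset[of _ "Pow {..<n}"]) auto
  have finT: "finite T" unfolding T_def using finPP finQQ by auto
  have fT: "f ` B \<subseteq> T"
  proof
    fix x assume "x \<in> f ` B"
    then obtain e where e: "e \<in> B" "x = f e" by auto
    have "supp e \<noteq> {}" using props(3)[OF e(1)] by auto
    then have "Min (supp e) \<in> supp e" using finsupp by (meson Min_in)
    then have "e (Min (supp e)) \<noteq> 0" unfolding supp_def by auto
    then show "x \<in> T" unfolding e(2) f_def T_def PP_def QQ_def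
      using props[OF e(1)] suppn by auto
  qed
  have inj: "inj_on f B"
  proof (rule inj_onI)
    fix e1 e2 assume e1: "e1 \<in> B" and e2: "e2 \<in> B" and eq: "f e1 = f e2"
    define P where "P = supp e1"
    define Q where "Q = supp (W e1)"
    define i0 where "i0 = Min P"
    have P2: "supp e2 = P" and Q2: "supp (W e2) = Q" and x: "e1 i0 = e2 i0"
      using eq unfolding f_def P_def Q_def i0_def by auto
    have "P \<noteq> {}" using props(3)[OF e1] P_def by auto
    then have i0P: "i0 \<in> P" unfolding i0_def using finsupp P_def by (meson Min_in)
    have PQ: "P \<inter> Q = {}" using props(1)[OF e1] P_def Q_def by auto
    have fP: "finite P" "finite Q" using finsupp P_def Q_def by auto
    have cPQ: "card (P \<union> Q) = 4" using props(2,3)[OF e1] P_def Q_def PQ fP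
      by (simp add: card_Un_disjoint)
    have z1: "W e1 b = 0" if "b < n" "b \<notin> Q" for b using that Q_def supp_def by auto
    have z2: "W e2 b = 0" if "b < n" "b \<notin> Q" for b using that Q2 supp_def by auto
    have y1: "e1 b = 0" if "b < n" "b \<notin> P" for b using that P_def supp_def by auto
    have y2: "e2 b = 0" if "b < n" "b \<notin> P" for b using that P2 supp_def by auto
    define d where "d b = (e1 b - W e1 b) - (e2 b - W e2 b)" for b
    have sd: "\<forall>a<3. syndrome n u \<alpha> d a = 0"
      unfolding d_def syn_diff using props(6)[OF e1] props(6)[OF e2] by simp
    have "{i. i < n \<and> d i \<noteq> 0} \<subseteq> (P \<union> Q) - {i0}"
    proof
      fix b assume b: "b \<in> {i. i < n \<and> d i \<noteq> 0}"
      have "i0 \<notin> Q" using i0P PQ by blast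
      moreover have "i0 < n" using i0P suppn P_def by blast
      ultimately have "d i0 = 0" using x z1 z2 unfolding d_def by simp
      then have "b \<noteq> i0" using b by auto
      moreover have "b \<in> P \<union> Q" using b y1 y2 z1 z2 unfolding d_def by fastforce
      ultimately show "b \<in> (P \<union> Q) - {i0}" by auto
    qed
    moreover have "card ((P \<union> Q) - {i0}) = 3" using cPQ i0P fP by simp
    ultimately have "card {i. i < n \<and> d i \<noteq> 0} \<le> 3"
      by (metis card_mono fP finite_Diff finite_UnI)
    then have d0: "\<forall>i<n. d i = 0" using codeword_zero[OF n3 assms(3,4) sd] by blast
    show "e1 = e2"
    proof
      fix b
      show "e1 b = e2 b"
      proof (cases "b < n")
        case True
        show ?thesis
        proof (cases "b \<in> P")
          case True
          then have "b \<notin> Q" using PQ by auto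
          then show ?thesis using d0 \<open>b < n\<close> z1 z2 unfolding d_def by fastforce
        next
          case False then show ?thesis using y1 y2 \<open>b < n\<close> by auto
        qed
      next
        case False
        then show ?thesis using props(4)[OF e1] props(4)[OF e2] unfolding vecs_def by auto
      qed
    qed
  qed
  have cB: "card B \<le> card T" using card_inj_on_le[OF inj fT finT] .
  have cQQ: "card (QQ P) = (n - 2) choose 2" if "P \<in> PP" for P
  proof -
    have "P \<subseteq> {..<n}" "card P = 2" using that unfolding PP_def by auto
    then have "card ({..<n} - P) = n - 2" using card_Diff_subset[of P "{..<n}"] finite_subset[of P "{..<n}"] by simp
    then show ?thesis unfolding QQ_def using n_subsets[of "{..<n} - P" 2] by simp
  qed
  have cT: "card T = card PP * (((n - 2) choose 2) * (CARD('a) - 1))"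
    unfolding T_def using finPP finQQ cQQ by (simp add: card_cartesian_product card_Diff_singleton)
  have cPP: "card PP = n choose 2" unfolding PP_def using n_subsets[of "{..<n}" 2] by simp
  have q: "real CARD('a) - 1 > 0" using assms(1,2) by simp
  have ch: "real ((n - 2) choose 2) = real (n - 2) * real (n - 3) / 2"
  proof -
    have "real (2 * ((n - 2) choose 2)) = real ((n - 2) * (n - 2 - 1))" by (metis two_choose2)
    moreover have "n - 2 - 1 = n - 3" by simp
    ultimately show ?thesis by simp
  qed
  have "real (card B) \<le> real (n choose 2) * (real ((n - 2) choose 2) * (real CARD('a) - 1))"
  proof -
    have "card B \<le> (n choose 2) * (((n - 2) choose 2) * (CARD('a) - 1))"
      using cB cT cPP by simp
    then have "real (card B) \<le> real ((n choose 2) * (((n - 2) choose 2) * (CARD('a) - 1)))"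
      by (simp only: of_nat_le_iff)
    moreover have "real (CARD('a) - 1) = real CARD('a) - 1" using assms(1,2) by (simp add: of_nat_diff)
    ultimately show ?thesis by (simp only: of_nat_mult)
  qed
  also have "\<dots> = (real (n - 2) * real (n - 3)) / (2 * (real CARD('a) - 1))
            * (real CARD('a) - 1)^2 * real (n choose 2)"
    unfolding ch using q by (simp add: field_simps power2_eq_square)
  finally show ?thesis unfolding B_def .
qed
end
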